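(* In the algorithm described in the context, for each agent $i$ and each round $r$, when $N$ is sufficiently large such that $N\ge4\ln N$, the number $V_i^r$ of perturbed adoption vectors sampled by agent $i$ in round $r$ satisfies $$\frac{3(1-\beta)}{32}hg(N)\le V_i^r\le\frac{15}{8}hg(N)$$ with probability at least $1-\frac{6M+3}{N^{10}}$.
   Context: Setting. $\mathcal G=(\mathcal N,\mathcal E)$ is a connected, non-bipartite undirected graph on agents $\mathcal N=\{1,\dots,N\}$; $\mathcal N_i$ is the neighbor set of $i$, $N_i=|\mathcal N_i|$. There are $M$ options; quality signals $\Phi_j^r\in\{0,1\}$ are i.i.d. Bernoulli$(\eta_j)$ over rounds $r$. $X^r_{i,j}\in\{0,1\}$ indicates agent $i$ adopts option $j$ in round $r$ ($\sum_jX^r_{i,j}\le1$); $D^r_j=\sum_iX^r_{i,j}$, $D^r=\sum_jD^r_j$, $Q^r_j=D^r_j/D^r$, $Q^0_j=1/M$. The function $g:\mathbb N^+\to\mathbb R$ satisfies: for every $\ell>0$, $g(N)>\ell\ln N$ and $g(N)<\ell N$ for all sufficiently large $N$. Parameters: $\varepsilon>0$, $\mu\in(0,1)$, $\beta\in(1/2,1)$, $\sigma\ge11$, $h=16\sigma/(1-\beta)$. Metropolis–Hastings random walk: from $i$ move to $i'\in\mathcal N_i$ with probability $\min\{1/N_i,1/N_{i'}\}$, else stay; walk length $L=O(\log N)$ chosen so that the endpoint is at each agent with probability in $[\frac1N-\frac1{N^3},\frac1N+\frac1{N^3}]$. Round $r$: (1) an agent that adopted an option in round $r-1$ perturbs each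 coordinate of its adoption vector independently (keep with probability $\frac{e^{\varepsilon/2}}{e^{\varepsilon/2}+1}$, flip otherwise); (2) each such agent launches $hg(N)$ independent random-walk tokens of length $L$ carrying its perturbed vector (forwarded via per-agent FIFO queues, up to $hg(N)$ tokens per agent per slot); a token is sampled by the agent where it ends; $V^r_i$ is the number of tokens sampled by $i$; (3) with $\Lambda^r_{i,j}$ the fraction of sampled vectors with $j$-th coordinate $1$, $\widetilde Q^r_{i,j}=\max\{\frac{e^{\varepsilon/2}+1}{e^{\varepsilon/2}-1}\Lambda^r_{i,j}-\frac1{e^{\varepsilon/2}-1},0\}$, $\widehat Q^r_{i,j}=\widetilde Q^r_{i,j}/\sum_{j'}\widetilde Q^r_{i,j'}$, and $i$ selects option $j$ with probability $(1-\mu)\widehat Q^r_{i,j}+\mu/M$; (4) having selected $j^*$, $i$ adopts it with probability $\beta$ if $\Phi^r_{j^*}=1$, $1-\beta$ if $\Phi^r_{j^*}=0$, else adopts nothing. *)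

theory Defs
  imports "HOL-Probability.Probability"
begin

definition undirected_graph :: "nat \<Rightarrow> (nat \<Rightarrow> nat \<Rightarrow> bool) \<Rightarrow> bool" where
  "undirected_graph N E \<longleftrightarrow>
     (\<forall>i j. E i j \<longrightarrow> i < N \<and> j < N) \<and> (\<forall>i j. E i j \<longrightarrow> E j i) \<and> (\<forall>i. \<not> E i i)"

definition graph_connected :: "nat \<Rightarrow> (nat \<Rightarrow> nat \<Rightarrow> bool) \<Rightarrow> bool" where
  "graph_connected N E \<longleftrightarrow> (\<forall>i<N. \<forall>j<N. E\<^sup>*\<^sup>* i j)"

definition graph_bipartite :: "nat \<Rightarrow> (nat \<Rightarrow> nat \<Rightarrow> bool) \<Rightarrow> bool" where
  "graph_bipartite N E \<longleftrightarrow> (\<exists>c :: nat \<Rightarrow> bool. \<forall>i j. E i j \<longrightarrow> c i \<noteq> c j)"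

definition nbrs :: "nat \<Rightarrow> (nat \<Rightarrow> nat \<Rightarrow> bool) \<Rightarrow> nat \<Rightarrow> nat set" where
  "nbrs N E i = {i'. i' < N \<and> E i i'}"

definition deg :: "nat \<Rightarrow> (nat \<Rightarrow> nat \<Rightarrow> bool) \<Rightarrow> nat \<Rightarrow> nat" where
  "deg N E i = card (nbrs N E i)"

definition mh_prob :: "nat \<Rightarrow> (nat \<Rightarrow> nat \<Rightarrow> bool) \<Rightarrow> nat \<Rightarrow> nat \<Rightarrow> real" where
  "mh_prob N E i i' =
     (if i' \<in> nbrs N E i then min (1 / real (deg N E i)) (1 / real (deg N E i'))
      else if i' = i then 1 - (\<Sum>k\<in>nbrs N E i. min (1 / real (deg N E i)) (1 / real (deg N E k)))
      else 0)"

definition mh_step :: "nat \<Rightarrow> (nat \<Rightarrow> nat \<Rightarrow> bool) \<Rightarrow> nat \<Rightarrow> nat pmf" where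
  "mh_step N E i = embed_pmf (mh_prob N E i)"

fun mh_walk :: "nat \<Rightarrow> (nat \<Rightarrow> nat \<Rightarrow> bool) \<Rightarrow> nat \<Rightarrow> nat \<Rightarrow> nat pmf" where
  "mh_walk N E 0 i = return_pmf i"
| "mh_walk N E (Suc n) i = mh_walk N E n i \<bind> mh_step N E"

text \<open>Adoption state: X i = Some j iff agent i adopted option j; None = adopted nothing.\<close>
type_synonym adoption = "nat \<Rightarrow> nat option"

text \<open>Randomized response on the adoption vector (one-hot vector of option j,
  coordinates 0..M-1): each coordinate kept w.p. e^(eps/2)/(e^(eps/2)+1), flipped otherwise.\<close>
definition perturb :: "nat \<Rightarrow> real \<Rightarrow> nat \<Rightarrow> (nat \<Rightarrow> bool) pmf" where
  "perturb M \<epsilon> j = Pi_pmf {..<M} False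
     (\<lambda>k. map_pmf (\<lambda>keep. if keep then k = j else k \<noteq> j)
            (bernoulli_pmf (exp (\<epsilon>/2) / (exp (\<epsilon>/2) + 1))))"

text \<open>Number of tokens launched by each adopting agent: h g(N), rounded up to a natural number.\<close>
definition num_tokens :: "real \<Rightarrow> real \<Rightarrow> (nat \<Rightarrow> real) \<Rightarrow> nat \<Rightarrow> nat" where
  "num_tokens \<beta> \<sigma> g N = nat \<lceil>(16 * \<sigma> / (1 - \<beta>)) * g N\<rceil>"

text \<open>Estimate hat Q from the sampled vectors of one agent.  Convention: if no
  vector is sampled or all tilde Q vanish, hat Q is uniform 1/M (= Q^0).\<close>
definition Qhat :: "nat \<Rightarrow> real \<Rightarrow> nat \<Rightarrow> (nat \<Rightarrow> real) \<Rightarrow> nat \<Rightarrow> real" where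
  "Qhat M \<epsilon> V \<Lambda> j =
     (let Qt = (\<lambda>j'. max ((exp (\<epsilon>/2) + 1) / (exp (\<epsilon>/2) - 1) * \<Lambda> j' - 1 / (exp (\<epsilon>/2) - 1)) 0);
          S = (\<Sum>j'<M. Qt j')
      in if V = 0 \<or> S = 0 then 1 / real M else Qt j / S)"

definition select_pmf :: "nat \<Rightarrow> real \<Rightarrow> (nat \<Rightarrow> real) \<Rightarrow> nat pmf" where
  "select_pmf M \<mu> Q = embed_pmf (\<lambda>j. if j < M then (1 - \<mu>) * Q j + \<mu> / real M else 0)"

text \<open>One round: given the adoptions of the previous round, returns the pair
  (adoptions of this round, numbers V_i of sampled vectors in this round).\<close>
definition round_step ::
  "nat \<Rightarrow> (nat \<Rightarrow> nat \<Rightarrow> bool) \<Rightarrow> nat \<Rightarrow> nat \<Rightarrow> (nat \<Rightarrow> real) \<Rightarrow> real \<Rightarrow> real \<Rightarrow> real \<Rightarrow> nat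
   \<Rightarrow> adoption \<Rightarrow> (adoption \<times> (nat \<Rightarrow> nat)) pmf" where
  "round_step N E L M \<eta> \<epsilon> \<mu> \<beta> T X =
     (let A = {a. a < N \<and> X a \<noteq> None} in
      do {
        pv \<leftarrow> Pi_pmf A (\<lambda>_. False) (\<lambda>a. perturb M \<epsilon> (the (X a)));
        e \<leftarrow> Pi_pmf (A \<times> {..<T}) 0 (\<lambda>(a, t). mh_walk N E L a);
        let V = (\<lambda>i. card {tk \<in> A \<times> {..<T}. e tk = i});
        let \<Lambda> = (\<lambda>i j. real (card {tk \<in> A \<times> {..<T}. e tk = i \<and> pv (fst tk) j}) / real (V i));
        \<Phi> \<leftarrow> Pi_pmf {..<M} False (\<lambda>j. bernoulli_pmf (\<eta> j));
        X' \<leftarrow> Pi_pmf {..<N} None (\<lambda>i.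
                do {
                  j \<leftarrow> select_pmf M \<mu> (Qhat M \<epsilon> (V i) (\<Lambda> i));
                  b \<leftarrow> bernoulli_pmf (if \<Phi> j then \<beta> else 1 - \<beta>);
                  return_pmf (if b then Some j else None)
                });
        return_pmf (X', V)
      })"

text \<open>The whole process: state after round r (adoptions X^r and counts V^r).
  Before round 1 nobody has adopted (round 1 therefore uses hat Q = Q^0 = 1/M).\<close>
fun run ::
  "nat \<Rightarrow> (nat \<Rightarrow> nat \<Rightarrow> bool) \<Rightarrow> nat \<Rightarrow> nat \<Rightarrow> (nat \<Rightarrow> real) \<Rightarrow> real \<Rightarrow> real \<Rightarrow> real \<Rightarrow> nat
   \<Rightarrow> nat \<Rightarrow> (adoption \<times> (nat \<Rightarrow> nat)) pmf" where
  "run N E L M \<eta> \<epsilon> \<mu> \<beta> T 0 = return_pmf (\<lambda>_. None, \<lambda>_. 0)"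
| "run N E L M \<eta> \<epsilon> \<mu> \<beta> T (Suc r) =
     run N E L M \<eta> \<epsilon> \<mu> \<beta> T r \<bind> (\<lambda>(X, V). round_step N E L M \<eta> \<epsilon> \<mu> \<beta> T X)"

end

theory Submission
  imports Defs "HOL-Probability.Probability"
begin


lemma prob_bind_pmf_eq:
  "measure_pmf.prob (bind_pmf p f) B = measure_pmf.expectation p (\<lambda>x. measure_pmf.prob (f x) B)"
proof -
  have int: "integrable (measure_pmf p) (\<lambda>x. measure_pmf.prob (f x) B)"
    by (intro measure_pmf.integrable_const_bound[where B=1]) auto
  have "emeasure (measure_pmf (bind_pmf p f)) B = (\<integral>\<^sup>+x. emeasure (f x) B \<partial>p)" by simp
  also have "\<dots> = (\<integral>\<^sup>+x. ennreal (measure_pmf.prob (f x) B) \<partial>p)"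
    by (simp add: measure_pmf.emeasure_eq_measure)
  also have "\<dots> = ennreal (measure_pmf.expectation p (\<lambda>x. measure_pmf.prob (f x) B))"
    by (intro nn_integral_eq_integral int) auto
  finally show ?thesis
    by (simp add: measure_pmf.emeasure_eq_measure ennreal_inj Bochner_Integration.integral_nonneg)
qed

lemma prob_bind_le:
  assumes "measure_pmf.prob p G \<le> d0" "d \<ge> 0"
    and "\<And>x. x \<in> set_pmf p \<Longrightarrow> x \<notin> G \<Longrightarrow> measure_pmf.prob (f x) B \<le> d"
  shows "measure_pmf.prob (bind_pmf p f) B \<le> d0 + d"
proof -
  have "measure_pmf.prob (bind_pmf p f) B = measure_pmf.expectation p (\<lambda>x. measure_pmf.prob (f x) B)"
    by (rule prob_bind_pmf_eq)
  also have "\<dots> \<le> measure_pmf.expectation p (\<lambda>x. indicator G x + d)"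
  proof (intro integral_mono_AE AE_pmfI)
    show "integrable (measure_pmf p) (\<lambda>x. measure_pmf.prob (f x) B)"
      by (intro measure_pmf.integrable_const_bound[where B=1]) auto
    show "integrable (measure_pmf p) (\<lambda>x. indicator G x + d)"
      by (intro measure_pmf.integrable_const_bound[where B="1+d"]) (auto simp: indicator_def assms(2))
    fix x assume "x \<in> set_pmf p"
    then show "measure_pmf.prob (f x) B \<le> indicator G x + d"
    proof (cases "x \<in> G")
      case True
      have "measure_pmf.prob (f x) B \<le> 1" by (rule measure_pmf.prob_le_1)
      moreover have "indicator G x = (1::real)" using True by simp
      ultimately show ?thesis using assms(2) by linarith
    qed (use assms(3)[of x] \<open>x \<in> set_pmf p\<close> in simp)
  qed
  also have "\<dots> = measure_pmf.prob p G + d"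
    by (subst Bochner_Integration.integral_add) (auto simp: measure_pmf.prob_space measure_pmf.emeasure_eq_measure)
  finally show ?thesis using assms(1) by linarith
qed

lemma prob_bind_le0:
  assumes "d \<ge> 0" "\<And>x. x \<in> set_pmf p \<Longrightarrow> measure_pmf.prob (f x) B \<le> d"
  shows "measure_pmf.prob (bind_pmf p f) B \<le> d"
  using prob_bind_le[of p "{}" 0 d f B] assms by auto

lemma prob_bind_ge:
  assumes "\<And>x. x \<in> set_pmf p \<Longrightarrow> measure_pmf.prob (f x) B \<ge> c"
  shows "measure_pmf.prob (bind_pmf p f) B \<ge> c"
proof -
  have "measure_pmf.expectation p (\<lambda>x. c) \<le> measure_pmf.expectation p (\<lambda>x. measure_pmf.prob (f x) B)"
    by (intro integral_mono_AE AE_pmfI assms measure_pmf.integrable_const_bound[where B=1] measure_pmf.integrable_const) auto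
  then show ?thesis by (simp add: prob_bind_pmf_eq)
qed


lemma card_filter_sum: "finite I \<Longrightarrow> real (card {i\<in>I. Q i}) = (\<Sum>i\<in>I. of_bool (Q i))"
  by (simp add: of_bool_def sum.If_cases Collect_conj_eq Int_commute)

lemma mgf_single:
  fixes s :: real
  shows "measure_pmf.expectation q (\<lambda>x. exp (s * of_bool (P x))) = 1 + measure_pmf.prob q {x. P x} * (exp s - 1)"
proof -
  have "(\<lambda>x. exp (s * of_bool (P x))) = (\<lambda>x. 1 + (exp s - 1) * indicator {x. P x} x)"
    by (auto simp: indicator_def fun_eq_iff)
  then show ?thesis
    by (simp add: Bochner_Integration.integral_add measure_pmf.emeasure_eq_measure mult.commute)
qed

lemma mgf_count:
  fixes s :: real
  assumes "finite I"
  shows "measure_pmf.expectation (Pi_pmf I d p) (\<lambda>f. exp (s * real (card {i\<in>I. P i (f i)})))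
         = (\<Prod>i\<in>I. 1 + measure_pmf.prob (p i) {x. P i x} * (exp s - 1))"
proof -
  have "(\<lambda>f. exp (s * real (card {i\<in>I. P i (f i)}))) = (\<lambda>f. \<Prod>i\<in>I. exp (s * of_bool (P i (f i))))"
  proof
    fix f
    show "exp (s * real (card {i\<in>I. P i (f i)})) = (\<Prod>i\<in>I. exp (s * of_bool (P i (f i))))"
      unfolding card_filter_sum[OF assms] sum_distrib_left exp_sum[OF assms] ..
  qed
  then have "measure_pmf.expectation (Pi_pmf I d p) (\<lambda>f. exp (s * real (card {i\<in>I. P i (f i)})))
     = (\<Prod>i\<in>I. measure_pmf.expectation (p i) (\<lambda>x. exp (s * of_bool (P i x))))"
    using assms
    by (simp only:) (rule expectation_prod_Pi_pmf[where f="\<lambda>i x. exp (s * of_bool (P i x))"],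
        auto intro!: measure_pmf.integrable_const_bound[where B="exp \<bar>s\<bar>"])
  then show ?thesis by (simp add: mgf_single)
qed


lemma integrable_exp_count:
  fixes s :: real
  assumes "finite I"
  shows "integrable (measure_pmf (Pi_pmf I d p)) (\<lambda>f. exp (s * real (card {i\<in>I. P i (f i)})))"
proof (intro measure_pmf.integrable_const_bound[where B="exp (\<bar>s\<bar> * real (card I))"] AE_pmfI)
  fix f
  have "card {i\<in>I. P i (f i)} \<le> card I" using assms by (intro card_mono) auto
  then have "s * real (card {i\<in>I. P i (f i)}) \<le> \<bar>s\<bar> * real (card {i\<in>I. P i (f i)})"
     "\<bar>s\<bar> * real (card {i\<in>I. P i (f i)}) \<le> \<bar>s\<bar> * real (card I)"
    by (auto intro: mult_right_mono mult_left_mono)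
  then have "s * real (card {i\<in>I. P i (f i)}) \<le> \<bar>s\<bar> * real (card I)" by linarith
  then show "norm (exp (s * real (card {i\<in>I. P i (f i)}))) \<le> exp (\<bar>s\<bar> * real (card I))"
    by simp
qed auto

lemma chernoff_upper:
  fixes s a :: real
  assumes "finite I" "s > 0" "\<And>i. i \<in> I \<Longrightarrow> measure_pmf.prob (p i) {x. P i x} \<le> q i"
  shows "measure_pmf.prob (Pi_pmf I d p) {f. a \<le> real (card {i\<in>I. P i (f i)})}
          \<le> exp ((\<Sum>i\<in>I. q i) * (exp s - 1) - s * a)"
proof -
  let ?M = "measure_pmf (Pi_pmf I d p)"
  let ?u = "\<lambda>f. exp (s * real (card {i\<in>I. P i (f i)}))"
  have "{f. a \<le> real (card {i\<in>I. P i (f i)})} = {f \<in> space ?M. exp (s * a) \<le> ?u f}"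
    using assms(2) by auto
  then have "measure_pmf.prob (Pi_pmf I d p) {f. a \<le> real (card {i\<in>I. P i (f i)})}
      \<le> measure_pmf.expectation (Pi_pmf I d p) ?u / exp (s * a)"
    by (simp only:) (rule integral_Markov_inequality_measure[OF integrable_exp_count[OF assms(1)]], auto)
  also have "measure_pmf.expectation (Pi_pmf I d p) ?u = (\<Prod>i\<in>I. 1 + measure_pmf.prob (p i) {x. P i x} * (exp s - 1))"
    by (rule mgf_count[OF assms(1)])
  also have "\<dots> \<le> (\<Prod>i\<in>I. exp (q i * (exp s - 1)))"
  proof (intro prod_mono conjI)
    fix i assume i: "i \<in> I"
    have es: "exp s - 1 \<ge> 0" using assms(2) by simp
    show "0 \<le> 1 + measure_pmf.prob (p i) {x. P i x} * (exp s - 1)"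
      using es by (simp add: add_nonneg_nonneg)
    have "1 + measure_pmf.prob (p i) {x. P i x} * (exp s - 1) \<le> 1 + q i * (exp s - 1)"
      using assms(3)[OF i] es by (simp add: mult_right_mono)
    also have "\<dots> \<le> exp (q i * (exp s - 1))" by (rule exp_ge_add_one_self)
    finally show "1 + measure_pmf.prob (p i) {x. P i x} * (exp s - 1) \<le> exp (q i * (exp s - 1))" .
  qed
  also have "(\<Prod>i\<in>I. exp (q i * (exp s - 1))) = exp ((\<Sum>i\<in>I. q i) * (exp s - 1))"
    by (simp add: exp_sum[OF assms(1), symmetric] sum_distrib_right)
  finally show ?thesis
    by (simp add: exp_diff divide_right_mono)
qed

lemma chernoff_lower:
  fixes s a :: real
  assumes "finite I" "s > 0" "\<And>i. i \<in> I \<Longrightarrow> measure_pmf.prob (p i) {x. P i x} \<ge> q i"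
  shows "measure_pmf.prob (Pi_pmf I d p) {f. real (card {i\<in>I. P i (f i)}) \<le> a}
          \<le> exp ((\<Sum>i\<in>I. q i) * (exp (-s) - 1) + s * a)"
proof -
  let ?M = "measure_pmf (Pi_pmf I d p)"
  let ?u = "\<lambda>f. exp ((-s) * real (card {i\<in>I. P i (f i)}))"
  have "{f. real (card {i\<in>I. P i (f i)}) \<le> a} = {f \<in> space ?M. exp (-s * a) \<le> ?u f}"
    using assms(2) by auto
  then have "measure_pmf.prob (Pi_pmf I d p) {f. real (card {i\<in>I. P i (f i)}) \<le> a}
      \<le> measure_pmf.expectation (Pi_pmf I d p) ?u / exp (-s * a)"
    by (simp only:) (rule integral_Markov_inequality_measure[OF integrable_exp_count[OF assms(1)]], auto)
  also have "measure_pmf.expectation (Pi_pmf I d p) ?u = (\<Prod>i\<in>I. 1 + measure_pmf.prob (p i) {x. P i x} * (exp (-s) - 1))"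
    by (rule mgf_count[OF assms(1)])
  also have "\<dots> \<le> (\<Prod>i\<in>I. exp (q i * (exp (-s) - 1)))"
  proof (intro prod_mono conjI)
    fix i assume i: "i \<in> I"
    have es: "exp (-s) - 1 \<le> 0" "exp (-s) - 1 \<ge> -1" using assms(2) by auto
    have pr: "measure_pmf.prob (p i) {x. P i x} \<le> 1" by simp
    have "measure_pmf.prob (p i) {x. P i x} * (exp (-s) - 1) \<ge> -1"
      using mult_right_mono_neg[OF pr es(1)] es(2) by (metis mult_1 order.trans)
    then show "0 \<le> 1 + measure_pmf.prob (p i) {x. P i x} * (exp (-s) - 1)" by simp
    have "1 + measure_pmf.prob (p i) {x. P i x} * (exp (-s) - 1) \<le> 1 + q i * (exp (-s) - 1)"
      using assms(3)[OF i] es by (simp add: mult_right_mono_neg)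
    also have "\<dots> \<le> exp (q i * (exp (-s) - 1))" by (rule exp_ge_add_one_self)
    finally show "1 + measure_pmf.prob (p i) {x. P i x} * (exp (-s) - 1) \<le> exp (q i * (exp (-s) - 1))" .
  qed
  also have "(\<Prod>i\<in>I. exp (q i * (exp (-s) - 1))) = exp ((\<Sum>i\<in>I. q i) * (exp (-s) - 1))"
    by (simp add: exp_sum[OF assms(1), symmetric] sum_distrib_right)
  finally have "measure_pmf.prob (Pi_pmf I d p) {f. real (card {i\<in>I. P i (f i)}) \<le> a}
     \<le> exp ((\<Sum>i\<in>I. q i) * (exp (-s) - 1)) / exp (-s * a)"
    by (simp add: divide_right_mono)
  also have "exp ((\<Sum>i\<in>I. q i) * (exp (-s) - 1)) / exp (-s * a) = exp ((\<Sum>i\<in>I. q i) * (exp (-s) - 1) + s * a)"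
    by (simp add: exp_diff[symmetric])
  finally show ?thesis .
qed



lemma adopt_prob:
  assumes "1/2 < \<beta>" "\<beta> < 1"
  shows "measure_pmf.prob (bind_pmf S (\<lambda>j. do {
                  b \<leftarrow> bernoulli_pmf (if \<Phi> j then \<beta> else 1 - \<beta>);
                  return_pmf (if b then Some j else None) })) {x. x \<noteq> None} \<ge> 1 - \<beta>"
proof (rule prob_bind_ge)
  fix j
  let ?q = "if \<Phi> j then \<beta> else 1 - \<beta>"
  have q: "0 \<le> ?q" "?q \<le> 1" "1 - \<beta> \<le> ?q" using assms by auto
  have "measure_pmf.prob (bernoulli_pmf ?q \<bind> (\<lambda>b. return_pmf (if b then Some j else None))) {x. x \<noteq> None}
     = ?q"
    unfolding prob_bind_pmf_eq measure_return_pmf using q(1,2)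
    by (subst integral_bernoulli_pmf) (auto simp: indicator_def)
  then show "1 - \<beta> \<le> measure_pmf.prob (bernoulli_pmf ?q \<bind> (\<lambda>b. return_pmf (if b then Some j else None))) {x. x \<noteq> None}"
    using q(3) by simp
qed


lemma exp_m1_le: "exp (-1::real) \<le> 1/2"
proof -
  have "2 \<le> exp (1::real)" using exp_ge_add_one_self[of 1] by simp
  then show ?thesis by (simp add: exp_minus field_simps)
qed

lemma step1:
  assumes "1/2 < \<beta>" "\<beta> < 1"
  shows "measure_pmf.prob (round_step N E L M \<eta> \<epsilon> \<mu> \<beta> T X)
           {(X', V). real (card {a. a < N \<and> X' a \<noteq> None}) \<le> (1 - \<beta>) / 4 * real N}
         \<le> exp (- ((1 - \<beta>) / 4 * real N))"
  unfolding round_step_def Let_def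
proof (rule prob_bind_le0, simp, rule prob_bind_le0, simp, rule prob_bind_le0, simp)
  fix pv :: "nat \<Rightarrow> nat \<Rightarrow> bool" and e :: "nat \<times> nat \<Rightarrow> nat" and \<Phi> :: "nat \<Rightarrow> bool"
  let ?V = "\<lambda>i. card {tk \<in> {a. a < N \<and> X a \<noteq> None} \<times> {..<T}. e tk = i}"
  let ?\<Lambda> = "\<lambda>i j. real (card {tk \<in> {a. a < N \<and> X a \<noteq> None} \<times> {..<T}. e tk = i \<and> pv (fst tk) j}) / real (?V i)"
  let ?q = "\<lambda>i. do { j \<leftarrow> select_pmf M \<mu> (Qhat M \<epsilon> (?V i) (?\<Lambda> i));
                  b \<leftarrow> bernoulli_pmf (if \<Phi> j then \<beta> else 1 - \<beta>);
                  return_pmf (if b then Some j else None) }"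
  let ?G = "{X'. real (card {a. a < N \<and> X' a \<noteq> None}) \<le> (1 - \<beta>) / 4 * real N}"
  have GG: "?G = {X'. real (card {i\<in>{..<N}. X' i \<noteq> None}) \<le> (1 - \<beta>) / 4 * real N}" by auto
  have cl: "measure_pmf.prob (Pi_pmf {..<N} None ?q) ?G
      \<le> exp ((\<Sum>i\<in>{..<N}. 1 - \<beta>) * (exp (-1) - 1) + 1 * ((1 - \<beta>) / 4 * real N))"
    unfolding GG
    by (rule chernoff_lower[where P="\<lambda>i x. x \<noteq> None"]) (simp, simp, rule adopt_prob[OF assms])
  have "(\<Sum>i\<in>{..<N}. 1 - \<beta>) * (exp (-1) - 1) + 1 * ((1 - \<beta>) / 4 * real N)
       \<le> - ((1 - \<beta>) / 4 * real N)"
  proof -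
    have "(\<Sum>i\<in>{..<N}. 1 - \<beta>) = real N * (1 - \<beta>)" by simp
    moreover have "real N * (1 - \<beta>) * (exp (-1) - 1) \<le> real N * (1 - \<beta>) * (-1/2)"
      using exp_m1_le assms by (intro mult_left_mono) auto
    ultimately show ?thesis by (simp add: field_simps)
  qed
  with cl have G: "measure_pmf.prob (Pi_pmf {..<N} None ?q) ?G \<le> exp (- ((1 - \<beta>) / 4 * real N))"
    by (meson exp_le_cancel_iff order_trans)
  show "measure_pmf.prob (Pi_pmf {..<N} None ?q \<bind> (\<lambda>X'. return_pmf (X', ?V)))
           {(X', V). real (card {a. a < N \<and> X' a \<noteq> None}) \<le> (1 - \<beta>) / 4 * real N}
         \<le> exp (- ((1 - \<beta>) / 4 * real N))"
  proof -
    have "measure_pmf.prob (Pi_pmf {..<N} None ?q \<bind> (\<lambda>X'. return_pmf (X', ?V)))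
           {(X', V). real (card {a. a < N \<and> X' a \<noteq> None}) \<le> (1 - \<beta>) / 4 * real N}
         \<le> exp (- ((1 - \<beta>) / 4 * real N)) + 0"
      by (rule prob_bind_le[OF G]) (auto simp: measure_return_pmf indicator_def)
    then show ?thesis by simp
  qed
qed


lemma cont_zero:
  assumes "\<not> P V"
  shows "measure_pmf.prob (p \<bind> (\<lambda>\<Phi>. q \<Phi> \<bind> (\<lambda>X'. return_pmf (X', V)))) {(X', V). P V} \<le> 0"
  by (rule prob_bind_le0, simp, rule prob_bind_le0, simp) (use assms in \<open>simp add: measure_return_pmf\<close>)

lemma e_step:
  assumes "measure_pmf.prob p {e. P (V e)} \<le> d0"
  shows "measure_pmf.prob (p \<bind> (\<lambda>e. r e \<bind> (\<lambda>\<Phi>. q e \<Phi> \<bind> (\<lambda>X'. return_pmf (X', V e)))))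
           {(X', V). P V} \<le> d0"
proof -
  have "measure_pmf.prob (p \<bind> (\<lambda>e. r e \<bind> (\<lambda>\<Phi>. q e \<Phi> \<bind> (\<lambda>X'. return_pmf (X', V e)))))
           {(X', V). P V} \<le> d0 + 0"
    by (rule prob_bind_le[OF assms]) (auto intro: cont_zero)
  then show ?thesis by simp
qed

lemma tokens_bound:
  fixes lo hi :: real
  assumes fin: "A \<subseteq> {..<N}" and iN: "i < N"
    and walk: "\<forall>s<N. \<forall>k<N. 1 / real N - 1 / real N ^ 3 \<le> pmf (mh_walk N E L s) k
                         \<and> pmf (mh_walk N E L s) k \<le> 1 / real N + 1 / real N ^ 3"
  shows "measure_pmf.prob (Pi_pmf (A \<times> {..<T}) 0 (\<lambda>(a, t). mh_walk N E L a))
           {e. \<not> (lo \<le> real (card {tk \<in> A \<times> {..<T}. e tk = i}) \<and> real (card {tk \<in> A \<times> {..<T}. e tk = i}) \<le> hi)}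
         \<le> exp (real (card A) * real T * (1 / real N - 1 / real N ^ 3) * (exp (-1) - 1) + lo)
           + exp (real (card A) * real T * (1 / real N + 1 / real N ^ 3) * (exp (1/2) - 1) - hi / 2)"
proof -
  have finA: "finite A" using fin finite_subset by blast
  let ?I = "A \<times> {..<T}"
  let ?p = "Pi_pmf ?I 0 (\<lambda>(a, t). mh_walk N E L a)"
  let ?c = "\<lambda>e. real (card {tk \<in> ?I. e tk = i})"
  have finI: "finite ?I" using finA by simp
  have pr: "measure_pmf.prob ((\<lambda>(a, t). mh_walk N E L a) tk) {x. x = i} = pmf (mh_walk N E L (fst tk)) i" for tk
    by (cases tk) (simp add: measure_pmf_single)
  have G1: "measure_pmf.prob ?p {e. ?c e \<le> lo}
      \<le> exp ((\<Sum>tk\<in>?I. 1 / real N - 1 / real N ^ 3) * (exp (-1) - 1) + 1 * lo)"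
  proof (rule chernoff_lower[where P="\<lambda>tk x. x = i", OF finI])
    fix tk assume "tk \<in> ?I"
    then have "fst tk < N" using fin by auto
    then show "1 / real N - 1 / real N ^ 3 \<le> measure_pmf.prob ((\<lambda>(a, t). mh_walk N E L a) tk) {x. x = i}"
      unfolding pr using walk iN by blast
  qed simp
  have G2: "measure_pmf.prob ?p {e. hi / 2 / (1/2) \<le> ?c e}
      \<le> exp ((\<Sum>tk\<in>?I. 1 / real N + 1 / real N ^ 3) * (exp (1/2) - 1) - (1/2) * (hi / 2 / (1/2)))"
  proof (rule chernoff_upper[where P="\<lambda>tk x. x = i", OF finI])
    fix tk assume "tk \<in> ?I"
    then have "fst tk < N" using fin by auto
    then show "measure_pmf.prob ((\<lambda>(a, t). mh_walk N E L a) tk) {x. x = i} \<le> 1 / real N + 1 / real N ^ 3"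
      unfolding pr using walk iN by blast
  qed simp
  have cI: "real (card ?I) = real (card A) * real T" by (simp add: card_cartesian_product)
  have "measure_pmf.prob ?p {e. \<not> (lo \<le> ?c e \<and> ?c e \<le> hi)}
     \<le> measure_pmf.prob ?p ({e. ?c e \<le> lo} \<union> {e. hi / 2 / (1/2) \<le> ?c e})"
    by (rule measure_pmf.finite_measure_mono) auto
  also have "\<dots> \<le> measure_pmf.prob ?p {e. ?c e \<le> lo} + measure_pmf.prob ?p {e. hi / 2 / (1/2) \<le> ?c e}"
    by (rule measure_Un_le) auto
  also have "\<dots> \<le> exp (real (card A) * real T * (1 / real N - 1 / real N ^ 3) * (exp (-1) - 1) + lo)
           + exp (real (card A) * real T * (1 / real N + 1 / real N ^ 3) * (exp (1/2) - 1) - hi / 2)"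
    using G1 G2 cI by (simp add: mult.commute)
  finally show ?thesis .
qed

lemma step2:
  fixes lo hi :: real
  assumes iN: "i < N"
    and walk: "\<forall>s<N. \<forall>k<N. 1 / real N - 1 / real N ^ 3 \<le> pmf (mh_walk N E L s) k
                         \<and> pmf (mh_walk N E L s) k \<le> 1 / real N + 1 / real N ^ 3"
  shows "measure_pmf.prob (round_step N E L M \<eta> \<epsilon> \<mu> \<beta> T X)
           {(X', V). \<not> (lo \<le> real (V i) \<and> real (V i) \<le> hi)}
         \<le> exp (real (card {a. a < N \<and> X a \<noteq> None}) * real T * (1 / real N - 1 / real N ^ 3) * (exp (-1) - 1) + lo)
           + exp (real (card {a. a < N \<and> X a \<noteq> None}) * real T * (1 / real N + 1 / real N ^ 3) * (exp (1/2) - 1) - hi / 2)"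
  unfolding round_step_def Let_def
  apply (rule prob_bind_le0, simp add: add_nonneg_nonneg)
  apply (rule e_step[where P="\<lambda>V. \<not> (lo \<le> real (V i) \<and> real (V i) \<le> hi)"])
  apply (rule tokens_bound[OF _ iN walk])
  apply auto
  done


lemma exp_le_N10:
  fixes x N :: real
  assumes "N > 0" "10 * ln N \<le> x"
  shows "exp (- x) \<le> 1 / N ^ 10"
proof -
  have "exp (- x) \<le> exp (- (10 * ln N))" using assms(2) by simp
  also have "exp (- (10 * ln N)) = 1 / exp (ln (N ^ 10))"
    using assms(1) by (simp add: exp_minus ln_realpow inverse_eq_divide)
  also have "\<dots> = 1 / N ^ 10" using assms(1) by simp
  finally show ?thesis .
qed

lemma num_lo:
  fixes a T H N \<beta> \<sigma> g :: real
  assumes N: "N \<ge> 10" and a: "a > (1 - \<beta>) / 4 * N" and T: "T \<ge> H"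
    and H: "H = 16 * \<sigma> / (1 - \<beta>) * g" and b: "0 < 1 - \<beta>" and s: "\<sigma> \<ge> 11"
    and g: "g \<ge> 2 * lnN" and l: "lnN \<ge> 0"
  shows "a * T * (1 / N - 1 / N ^ 3) * (exp (-1) - 1) + 3 * (1 - \<beta>) / 32 * H \<le> - (10 * lnN)"
proof -
  have g0: "g \<ge> 0" using g l by linarith
  have H0: "H \<ge> 0" using H b s g0 by simp
  have bH: "(1 - \<beta>) * H = 16 * \<sigma> * g" using H b by simp
  have "N * N \<ge> 10 * 10" by (rule mult_mono) (use N in auto)
  then have N2: "N ^ 2 \<ge> 100" by (simp add: power2_eq_square)
  have q: "1 / N - 1 / N ^ 3 \<ge> (99/100) / N"
  proof -
    have "1 / N ^ 3 = (1 / N) * (1 / N ^ 2)" by (simp add: power3_eq_cube power2_eq_square)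
    also have "\<dots> \<le> (1 / N) * (1 / 100)" using N N2 by (rule_tac mult_left_mono) (auto simp: field_simps)
    finally show ?thesis by simp
  qed
  have "(1 - \<beta>) / 4 * N \<ge> 0" using b N by simp
  then have a0: "a \<ge> 0" using a by linarith
  have aT: "a * T \<ge> (1 - \<beta>) / 4 * N * H"
    using mult_mono[of "(1 - \<beta>) / 4 * N" a H T] a T H0 a0 by simp
  have aT0: "a * T \<ge> 0" using a0 T H0 by simp
  have K: "a * T * (1 / N - 1 / N ^ 3) \<ge> (1 - \<beta>) / 4 * N * H * ((99/100) / N)"
    using mult_mono[of "(1 - \<beta>) / 4 * N * H" "a * T" "(99/100) / N" "1 / N - 1 / N ^ 3"] aT q aT0 N by simp
  have K': "(1 - \<beta>) / 4 * N * H * ((99/100) / N) = (99/400) * ((1 - \<beta>) * H)" using N by simp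
  have e: "exp (-1) - 1 \<le> - 1 / (2::real)" using exp_m1_le by simp
  have "a * T * (1 / N - 1 / N ^ 3) * (exp (-1) - 1) \<le> a * T * (1 / N - 1 / N ^ 3) * (-1/2)"
  proof (rule mult_left_mono[OF e])
    have "0 \<le> (99/400) * ((1 - \<beta>) * H)" using H0 b by simp
    then show "0 \<le> a * T * (1 / N - 1 / N ^ 3)" using K K' by linarith
  qed
  also have "\<dots> \<le> (99/400) * ((1 - \<beta>) * H) * (-1/2)"
    by (rule mult_right_mono_neg[OF K[unfolded K']]) simp
  finally have "a * T * (1 / N - 1 / N ^ 3) * (exp (-1) - 1) + 3 * (1 - \<beta>) / 32 * H
      \<le> - (3/100) * ((1 - \<beta>) * H)"
  proof -
    have "3 * (1 - \<beta>) / 32 * H = 3/32 * ((1 - \<beta>) * H)" by simp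
    then show "a * T * (1 / N - 1 / N ^ 3) * (exp (-1) - 1) \<le> (99/400) * ((1 - \<beta>) * H) * (-1/2) \<Longrightarrow> ?thesis"
      by linarith
  qed
  also have "\<dots> = - (12/25) * \<sigma> * g" using bH by simp
  also have "\<dots> \<le> - (132/25) * g" using s g0 by (intro mult_right_mono) auto
  also have "\<dots> \<le> - (10 * lnN)" using g l by simp
  finally show ?thesis .
qed


lemma num_hi:
  fixes a T H N \<beta> \<sigma> g lnN :: real
  assumes N: "N \<ge> 10" and a0: "0 \<le> a" and aN: "a \<le> N" and T0: "0 \<le> T" and T: "T \<le> H + 1"
    and H: "H = 16 * \<sigma> / (1 - \<beta>) * g" and b: "0 < 1 - \<beta>" "1 - \<beta> \<le> 1" and s: "\<sigma> \<ge> 11"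
    and g: "g \<ge> 2 * lnN" and l: "lnN \<ge> 1"
  shows "a * T * (1 / N + 1 / N ^ 3) * (exp (1/2) - 1) - 15 / 8 * H / 2 \<le> - (10 * lnN)"
proof -
  have g0: "g \<ge> 0" using g l by linarith
  have "N * N \<ge> 10 * 10" by (rule mult_mono) (use N in auto)
  then have N2: "N ^ 2 \<ge> 100" by (simp add: power2_eq_square)
  have q: "1 / N + 1 / N ^ 3 \<le> (101/100) / N"
  proof -
    have "1 / N ^ 3 = (1 / N) * (1 / N ^ 2)" by (simp add: power3_eq_cube power2_eq_square)
    also have "\<dots> \<le> (1 / N) * (1 / 100)" using N N2 by (rule_tac mult_left_mono) (auto simp: field_simps)
    finally show ?thesis by simp
  qed
  have q0: "0 \<le> 1 / N + 1 / N ^ 3" using N by simp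
  have H0: "H \<ge> 0" using H b s g0 by simp
  have aT: "a * T \<le> N * (H + 1)"
    using mult_mono[of a N T "H + 1"] aN T a0 T0 H0 N by simp
  have aT0: "a * T \<ge> 0" using a0 T0 by simp
  have K: "a * T * (1 / N + 1 / N ^ 3) \<le> N * (H + 1) * ((101/100) / N)"
    using mult_mono[of "a * T" "N * (H + 1)" "1 / N + 1 / N ^ 3" "(101/100) / N"] aT q q0 H0 N by simp
  have K': "N * (H + 1) * ((101/100) / N) = (101/100) * (H + 1)" using N by simp
  have K0: "a * T * (1 / N + 1 / N ^ 3) \<ge> 0" using aT0 q0 by simp
  have e: "exp (1/2::real) - 1 \<le> 3/4"
    using exp_bound[of "1/2::real"] by (simp add: power2_eq_square)
  have e0: "exp (1/2::real) - 1 \<ge> 0" by simp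
  have "a * T * (1 / N + 1 / N ^ 3) * (exp (1/2) - 1) \<le> (101/100) * (H + 1) * (3/4)"
  proof -
    have "0 \<le> (101/100) * (H + 1)" using H0 by simp
    from mult_mono[OF K[unfolded K'] e this e0] show ?thesis by simp
  qed
  then have 1: "a * T * (1 / N + 1 / N ^ 3) * (exp (1/2) - 1) - 15 / 8 * H / 2 \<le> 303/400 - (9/50) * H"
  proof -
    have eq: "(101/100) * (H + 1) * (3/4) = 303/400 + 303/400 * H" by (simp add: algebra_simps)
    define X where "X = a * T * (1 / N + 1 / N ^ 3) * (exp (1/2) - 1)"
    show "X \<le> (101/100) * (H + 1) * (3/4) \<Longrightarrow> X - 15 / 8 * H / 2 \<le> 303/400 - (9/50) * H"
      unfolding eq by linarith
  qed
  have "1 / (1 - \<beta>) \<ge> 1" using b by simp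
  then have "16 * \<sigma> * g * (1 / (1 - \<beta>)) \<ge> 16 * \<sigma> * g * 1"
    using s g0 by (intro mult_left_mono) auto
  then have H1: "H \<ge> 16 * \<sigma> * g" using H by simp
  have "16 * \<sigma> * g \<ge> 16 * 11 * g" using s g0 by (intro mult_right_mono) auto
  with H1 have "H \<ge> 176 * g" by simp
  with 1 g l show ?thesis by linarith
qed


theorem lemma6:
  fixes g :: "nat \<Rightarrow> real" and M :: nat and \<eta> :: "nat \<Rightarrow> real"
    and \<epsilon> \<mu> \<beta> \<sigma> :: real
  assumes g_lower: "\<forall>l>0. eventually (\<lambda>N. g N > l * ln (real N)) at_top"
    and g_upper: "\<forall>l>0. eventually (\<lambda>N. g N < l * real N) at_top"
    and M_pos: "M \<ge> 1"
    and \<eta>_prob: "\<forall>j<M. 0 \<le> \<eta> j \<and> \<eta> j \<le> 1"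
    and \<epsilon>_pos: "\<epsilon> > 0"
    and \<mu>_range: "0 < \<mu> \<and> \<mu> < 1"
    and \<beta>_range: "1/2 < \<beta> \<and> \<beta> < 1"
    and \<sigma>_ge: "\<sigma> \<ge> 11"
  shows "\<exists>N0. \<forall>N \<ge> N0. \<forall>E L i r.
           undirected_graph N E \<longrightarrow> graph_connected N E \<longrightarrow> \<not> graph_bipartite N E \<longrightarrow>
           (\<forall>s<N. \<forall>k<N. 1 / real N - 1 / real N ^ 3 \<le> pmf (mh_walk N E L s) k
                         \<and> pmf (mh_walk N E L s) k \<le> 1 / real N + 1 / real N ^ 3) \<longrightarrow>
           i < N \<longrightarrow> r \<ge> 2 \<longrightarrow>
           measure_pmf.prob (run N E L M \<eta> \<epsilon> \<mu> \<beta> (num_tokens \<beta> \<sigma> g N) r)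
             {(X, V). 3 * (1 - \<beta>) / 32 * ((16 * \<sigma> / (1 - \<beta>)) * g N) \<le> real (V i)
                      \<and> real (V i) \<le> 15 / 8 * ((16 * \<sigma> / (1 - \<beta>)) * g N)}
           \<ge> 1 - (6 * real M + 3) / real N ^ 10"
proof -
  have b: "1/2 < \<beta>" "\<beta> < 1" using \<beta>_range by auto
  obtain N1 where N1: "\<And>N. N \<ge> N1 \<Longrightarrow> g N > 2 * ln (real N)"
    using g_lower[rule_format, of 2] by (auto simp: eventually_at_top_linorder)
  have "(1 - \<beta>) / 40 > 0" using b by simp
  then obtain N2 where N2: "\<And>N. N \<ge> N2 \<Longrightarrow> g N < (1 - \<beta>) / 40 * real N"
    using g_upper[rule_format, of "(1 - \<beta>) / 40"] by (auto simp: eventually_at_top_linorder)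
  show ?thesis
  proof (intro exI[of _ "max (max N1 N2) 10"] allI impI)
    fix N :: nat and E :: "nat \<Rightarrow> nat \<Rightarrow> bool" and L i r :: nat
    assume NN: "max (max N1 N2) 10 \<le> N"
      and walk: "\<forall>s<N. \<forall>k<N. 1 / real N - 1 / real N ^ 3 \<le> pmf (mh_walk N E L s) k
                         \<and> pmf (mh_walk N E L s) k \<le> 1 / real N + 1 / real N ^ 3"
      and iN: "i < N" and r2: "2 \<le> r"
    have N10: "real N \<ge> 10" using NN by simp
    have gl: "g N > 2 * ln (real N)" using N1 NN by simp
    have gu: "g N < (1 - \<beta>) / 40 * real N" using N2 NN by simp
    have lnN: "ln (real N) \<ge> 1"
    proof -
      have "exp 1 \<le> real N" using exp_le N10 by linarith
      then have "ln (exp 1) \<le> ln (real N)" using N10 by (subst ln_le_cancel_iff) auto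
      then show ?thesis by simp
    qed
    define H where "H = (16 * \<sigma> / (1 - \<beta>)) * g N"
    define T where "T = num_tokens \<beta> \<sigma> g N"
    define lo where "lo = 3 * (1 - \<beta>) / 32 * H"
    define hi where "hi = 15 / 8 * H"
    have H0: "H \<ge> 0" using gl lnN b \<sigma>_ge unfolding H_def by simp
    have TH: "real T \<ge> H" "real T \<le> H + 1"
    proof -
      have c: "real (nat \<lceil>H\<rceil>) = real_of_int \<lceil>H\<rceil>" using H0 by (simp add: of_nat_nat)
      have "real T = real_of_int \<lceil>H\<rceil>" unfolding T_def num_tokens_def H_def[symmetric] c ..
      then show "real T \<ge> H" "real T \<le> H + 1"
        using le_of_int_ceiling[of H] of_int_ceiling_le_add_one[of H] by simp_all
    qed
    obtain r' where r': "r = Suc (Suc r')" using r2 by (metis add_2_eq_Suc le_Suc_ex)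
    let ?run = "run N E L M \<eta> \<epsilon> \<mu> \<beta> T"
    let ?B = "{(X, V). \<not> (lo \<le> real (V i) \<and> real (V i) \<le> hi)}"
    let ?G = "{(X, V). real (card {a. a < N \<and> X a \<noteq> None}) \<le> (1 - \<beta>) / 4 * real N}"
    have d1: "exp (- ((1 - \<beta>) / 4 * real N)) \<le> 1 / real N ^ 10"
    proof (rule exp_le_N10)
      have "(1 - \<beta>) * real N \<ge> 0" using b by simp
      then show "10 * ln (real N) \<le> (1 - \<beta>) / 4 * real N" using gl gu by linarith
    qed (use N10 in auto)
    have pG: "measure_pmf.prob (?run (Suc r')) ?G \<le> 1 / real N ^ 10"
    proof -
      have "measure_pmf.prob (?run (Suc r')) ?G \<le> exp (- ((1 - \<beta>) / 4 * real N))"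
        unfolding run.simps(2)
      proof (rule prob_bind_le0)
        fix x assume "x \<in> set_pmf (?run r')"
        obtain X V where x: "x = (X, V)" by (cases x)
        show "measure_pmf.prob ((\<lambda>(X, V). round_step N E L M \<eta> \<epsilon> \<mu> \<beta> T X) x) ?G
           \<le> exp (- ((1 - \<beta>) / 4 * real N))"
          unfolding x prod.case by (rule step1[OF b])
      qed simp
      then show ?thesis using d1 by linarith
    qed
    have pB: "measure_pmf.prob (round_step N E L M \<eta> \<epsilon> \<mu> \<beta> T X) ?B \<le> 2 / real N ^ 10"
      if XG: "(X, V) \<notin> ?G" for X V
    proof -
      let ?a = "real (card {a. a < N \<and> X a \<noteq> None})"
      have a1: "?a > (1 - \<beta>) / 4 * real N" using XG by simp
      have a2: "?a \<le> real N"
      proof -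
        have "card {a. a < N \<and> X a \<noteq> None} \<le> card {..<N}" by (rule card_mono) auto
        then show ?thesis by simp
      qed
      have e1: "?a * real T * (1 / real N - 1 / real N ^ 3) * (exp (-1) - 1) + lo \<le> - (10 * ln (real N))"
        unfolding lo_def
        by (rule num_lo[OF N10 a1 TH(1) H_def]) (use b \<sigma>_ge gl lnN in auto)
      have e2: "?a * real T * (1 / real N + 1 / real N ^ 3) * (exp (1/2) - 1) - hi / 2 \<le> - (10 * ln (real N))"
        unfolding hi_def
        by (rule num_hi[OF N10 _ a2 _ TH(2) H_def]) (use b \<sigma>_ge gl lnN in auto)
      have "measure_pmf.prob (round_step N E L M \<eta> \<epsilon> \<mu> \<beta> T X) ?B
          \<le> exp (?a * real T * (1 / real N - 1 / real N ^ 3) * (exp (-1) - 1) + lo)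
           + exp (?a * real T * (1 / real N + 1 / real N ^ 3) * (exp (1/2) - 1) - hi / 2)"
        by (rule step2[OF iN walk])
      also have "\<dots> \<le> 1 / real N ^ 10 + 1 / real N ^ 10"
      proof (rule add_mono)
        have "exp (- (- (?a * real T * (1 / real N - 1 / real N ^ 3) * (exp (-1) - 1) + lo))) \<le> 1 / real N ^ 10"
          by (rule exp_le_N10) (use e1 N10 in auto)
        then show "exp (?a * real T * (1 / real N - 1 / real N ^ 3) * (exp (-1) - 1) + lo) \<le> 1 / real N ^ 10"
          by (simp only: minus_minus)
        have "exp (- (- (?a * real T * (1 / real N + 1 / real N ^ 3) * (exp (1/2) - 1) - hi / 2))) \<le> 1 / real N ^ 10"
          by (rule exp_le_N10) (use e2 N10 in auto)
        then show "exp (?a * real T * (1 / real N + 1 / real N ^ 3) * (exp (1/2) - 1) - hi / 2) \<le> 1 / real N ^ 10"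
          by (simp only: minus_minus)
      qed
      finally show ?thesis by simp
    qed
    have "measure_pmf.prob (?run r) ?B \<le> 1 / real N ^ 10 + 2 / real N ^ 10"
    proof -
      have req: "?run r = ?run (Suc r') \<bind> (\<lambda>(X, V). round_step N E L M \<eta> \<epsilon> \<mu> \<beta> T X)"
        unfolding r' by (rule run.simps(2))
      show ?thesis unfolding req
      proof (rule prob_bind_le[OF pG])
        fix x assume "x \<in> set_pmf (?run (Suc r'))" "x \<notin> ?G"
        moreover obtain X V where x: "x = (X, V)" by (cases x)
        ultimately show "measure_pmf.prob ((\<lambda>(X, V). round_step N E L M \<eta> \<epsilon> \<mu> \<beta> T X) x) ?B
           \<le> 2 / real N ^ 10"
          unfolding x prod.case by (intro pB)
      qed simp
    qed
    moreover have "{(X, V). lo \<le> real (V i) \<and> real (V i) \<le> hi} = space (measure_pmf (?run r)) - ?B"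
      by auto
    ultimately have "measure_pmf.prob (?run r) {(X, V). lo \<le> real (V i) \<and> real (V i) \<le> hi}
        \<ge> 1 - 3 / real N ^ 10"
    proof -
      assume a1: "measure_pmf.prob (?run r) ?B \<le> 1 / real N ^ 10 + 2 / real N ^ 10"
        and a2: "{(X, V). lo \<le> real (V i) \<and> real (V i) \<le> hi} = space (measure_pmf (?run r)) - ?B"
      have "measure_pmf.prob (?run r) (space (measure_pmf (?run r)) - ?B) = 1 - measure_pmf.prob (?run r) ?B"
        by (rule measure_pmf.prob_compl) simp
      then show ?thesis unfolding a2 using a1 by simp
    qed
    moreover have "3 / real N ^ 10 \<le> (6 * real M + 3) / real N ^ 10"
      using N10 by (intro divide_right_mono) auto
    ultimately show "measure_pmf.prob (run N E L M \<eta> \<epsilon> \<mu> \<beta> (num_tokens \<beta> \<sigma> g N) r)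
             {(X, V). 3 * (1 - \<beta>) / 32 * ((16 * \<sigma> / (1 - \<beta>)) * g N) \<le> real (V i)
                      \<and> real (V i) \<le> 15 / 8 * ((16 * \<sigma> / (1 - \<beta>)) * g N)}
           \<ge> 1 - (6 * real M + 3) / real N ^ 10"
      unfolding T_def lo_def hi_def H_def by linarith
  qed
qed

end
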